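(* Let $L=8$ and let $B=2^s\ge 8$. Let $\alpha_0,\dots,\alpha_{B-1}$ be nonzero real LLRs of one list path at a rate-1 constituent block, indexed so that $|\alpha_0|<|\alpha_1|<\cdots<|\alpha_{B-1}|$, and let $\beta=(\beta_0,\dots,\beta_{B-1})\in\{0,1\}^B$ with $\beta_j=\frac{1-\mathrm{sgn}(\alpha_j)}{2}$. For a candidate sub-path $\hat\beta\in\{0,1\}^B$ define its incremental path metric $\Delta(\hat\beta)=\sum_{j=0}^{B-1}|\hat\beta_j-\beta_j|\,|\alpha_j|$. Let $\mathcal C\subseteq\{0,1\}^B$ be the following set of 13 vectors: $\beta$; $\beta\oplus e_p$ for $p=0,1,\dots,6$; $\beta\oplus e_0\oplus e_1$; $\beta\oplus e_0\oplus e_2$; $\beta\oplus e_1\oplus e_2$; $\beta\oplus e_0\oplus e_3$; $\beta\oplus e_0\oplus e_1\oplus e_2$. Then the $L=8$ maximum-likelihood sub-paths of this path (the 8 vectors of $\{0,1\}^B$ with the smallest incremental path metrics $\Delta$) fall into $\mathcal C$; that is, there is a set $S\subseteq\mathcal C$ with $|S|=8$ such that $\Delta(v)\le\Delta(w)$ for all $v\in S$ and all $w\in\{0,1\}^B\setminus S$. Consequently, in one-time path extension of all 8 list paths followed by pruning to the 8 paths of smallest path metric, restricting each path's extensions to these 13 error patterns incurs no loss.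
   Context: Setting: successive-cancellation list (SCL) decoding of a polar code with list size $L$. At a constituent block of length $B$ (a rate-1 node, i.e., all $B$ positions carry information, so every vector in $\{0,1\}^B$ is a valid codeword of the block), each list path $l$ has a path metric $\mathrm{PM}^l$ and soft inputs $\alpha_j$. A sub-path extending path $l$ is a choice of block output $\hat\beta\in\{0,1\}^B$; its new path metric is $\mathrm{PM}^l+\Delta(\hat\beta)$. After extension, the $L$ extended paths (over all parent paths) with the smallest path metrics survive. $e_p\in\{0,1\}^B$ denotes the vector with a $1$ in position $p$ (positions indexed $0,\dots,B-1$ in the sorted order above) and $0$ elsewhere; $\oplus$ is componentwise XOR. *)

theory Defs
  imports Complex_Main
begin

definition binvecs :: "nat \<Rightarrow> (nat \<Rightarrow> real) set" where
  "binvecs B = {v. (\<forall>j<B. v j \<in> {0, 1}) \<and> (\<forall>j\<ge>B. v j = 0)}"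

definition xorv :: "(nat \<Rightarrow> real) \<Rightarrow> (nat \<Rightarrow> real) \<Rightarrow> nat \<Rightarrow> real" where
  "xorv v w = (\<lambda>j. \<bar>v j - w j\<bar>)"

definition unitv :: "nat \<Rightarrow> nat \<Rightarrow> real" where
  "unitv p = (\<lambda>j. if j = p then 1 else 0)"

definition hard_dec :: "nat \<Rightarrow> (nat \<Rightarrow> real) \<Rightarrow> nat \<Rightarrow> real" where
  "hard_dec B alpha = (\<lambda>j. if j < B then (1 - sgn (alpha j)) / 2 else 0)"

definition delta :: "nat \<Rightarrow> (nat \<Rightarrow> real) \<Rightarrow> (nat \<Rightarrow> real) \<Rightarrow> real" where
  "delta B alpha bh = (\<Sum>j<B. \<bar>bh j - hard_dec B alpha j\<bar> * \<bar>alpha j\<bar>)"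

definition cand_set :: "nat \<Rightarrow> (nat \<Rightarrow> real) \<Rightarrow> (nat \<Rightarrow> real) set" where
  "cand_set B alpha =
    (let \<beta> = hard_dec B alpha in
     {\<beta>} \<union> {xorv \<beta> (unitv p) | p. p \<le> 6} \<union>
     {xorv (xorv \<beta> (unitv 0)) (unitv 1),
      xorv (xorv \<beta> (unitv 0)) (unitv 2),
      xorv (xorv \<beta> (unitv 1)) (unitv 2),
      xorv (xorv \<beta> (unitv 0)) (unitv 3),
      xorv (xorv (xorv \<beta> (unitv 0)) (unitv 1)) (unitv 2)})"

end

theory Submission
  imports Defs
begin

definition Cs :: "nat set set" where
  "Cs = {{}} \<union> {{p}|p. p \<le> 6} \<union> {{0,1},{0,2},{1,2},{0,3},{0,1,2}}"

lemma pow012: "F \<subseteq> {0,1,2::nat} \<Longrightarrow> F \<in> Cs"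
proof -
  assume "F \<subseteq> {0,1,2}"
  hence "F \<in> Pow {0,1,2}" by simp
  thus ?thesis unfolding Cs_def by (simp add: Pow_insert) (auto simp: insert_commute)
qed

lemma comb:
  fixes a :: "nat \<Rightarrow> real" and B :: nat
  assumes B: "B \<ge> 8" and mono: "\<And>i j. i < j \<Longrightarrow> j < B \<Longrightarrow> a i < a j"
    and nn: "\<And>j. a j \<ge> 0" and FB: "F \<subseteq> {..<B}" and FC: "F \<notin> Cs"
  shows "\<exists>Ts \<subseteq> Cs. card Ts = 8 \<and> (\<forall>X\<in>Ts. sum a X \<le> sum a F)"
proof -
  have le: "a i \<le> a j" if "i \<le> j" "j < B" for i j
    using mono[of i j] that by (cases "i = j") auto
  have finF: "finite F" using FB finite_subset by blast
  have sub: "sum a X \<le> sum a F" if "X \<subseteq> F" for X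
    using sum_mono2[OF finF that] nn by auto
  show ?thesis
  proof (cases "\<exists>m\<in>F. m \<ge> 7")
    case True
    then obtain m where m: "m \<in> F" "m \<ge> 7" by blast
    have mB: "m < B" using m FB by auto
    have am: "a m \<le> sum a F" using sub[of "{m}"] m by simp
    let ?T = "{{},{0},{1},{2},{3},{4},{5},{6}} :: nat set set"
    have "?T \<subseteq> Cs" unfolding Cs_def by auto
    moreover have "card ?T = 8" by (simp add: card_insert_if doubleton_eq_iff insert_eq_iff)
    moreover have "\<forall>X\<in>?T. sum a X \<le> sum a F"
      using am le[of 0 m] le[of 1 m] le[of 2 m] le[of 3 m] le[of 4 m] le[of 5 m] le[of 6 m] m mB nn[of m]
        sum_nonneg[of F a] nn by auto
    ultimately show ?thesis by blast
  next
    case no7: False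
    show ?thesis
    proof (cases "\<exists>m\<in>F. \<exists>i\<in>F. m \<ge> 4 \<and> i \<noteq> m")
      case True
      then obtain m i where mi: "m \<in> F" "i \<in> F" "m \<ge> 4" "i \<noteq> m" by blast
      have mB: "m < B" "i < B" using mi FB by auto
      have am: "a i + a m \<le> sum a F" using sub[of "{i,m}"] mi by simp
      let ?T = "{{},{0},{1},{2},{3},{4},{0,1},{0,2}} :: nat set set"
      have "?T \<subseteq> Cs" unfolding Cs_def by auto
      moreover have "card ?T = 8" by (simp add: card_insert_if doubleton_eq_iff insert_eq_iff)
      moreover have "\<forall>X\<in>?T. sum a X \<le> sum a F"
        using am le[of 0 m] le[of 1 m] le[of 2 m] le[of 3 m] le[of 4 m] le[of 0 i] mi mB nn[of m] nn[of i]
          sum_nonneg[of F a] by auto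
      ultimately show ?thesis by blast
    next
      case no4: False
      show ?thesis
      proof (cases "3 \<in> F \<and> (1 \<in> F \<or> 2 \<in> F)")
        case True
        then obtain i where i: "i \<in> F" "i = 1 \<or> i = 2" by blast
        have am: "a i + a 3 \<le> sum a F" using sub[of "{i,3}"] i True by auto
        let ?T = "{{},{0},{1},{2},{3},{0,1},{0,2},{1,2}} :: nat set set"
        have "?T \<subseteq> Cs" unfolding Cs_def by auto
        moreover have "card ?T = 8" by (simp add: card_insert_if doubleton_eq_iff insert_eq_iff)
        moreover have "\<forall>X\<in>?T. sum a X \<le> sum a F"
          using am mono[of 0 1] mono[of 1 2] mono[of 2 3] mono[of 0 2] B i nn[of 1] nn[of 2]
            sum_nonneg[of F a] by auto
        ultimately show ?thesis by blast
      next
        case False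
        have False
        proof (cases "\<exists>m\<in>F. m \<ge> 4")
          case True
          then obtain m where m: "m \<in> F" "m \<ge> 4" by blast
          have "F = {m}" using no4 m by blast
          moreover have "m \<le> 6" using no7 m by auto
          ultimately show False using FC unfolding Cs_def by auto
        next
          case f4: False
          show False
          proof (cases "3 \<in> F")
            case True
            have "F \<subseteq> {0,3}"
            proof
              fix x assume x: "x \<in> F"
              hence "x < 4" using f4 by force
              hence "x = 0 \<or> x = 1 \<or> x = 2 \<or> x = 3" by auto
              thus "x \<in> {0,3}" using False True x by auto
            qed
            hence "F = {3} \<or> F = {0,3}" using True by auto
            thus False using FC unfolding Cs_def by auto
          next
            case f3: False
            have "F \<subseteq> {0,1,2}"
            proof
              fix x assume x: "x \<in> F"
              hence "x < 4" using f4 by force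
              hence "x = 0 \<or> x = 1 \<or> x = 2 \<or> x = 3" by auto
              thus "x \<in> {0,1,2}" using f3 x by auto
            qed
            thus False using FC pow012 by blast
          qed
        qed
        thus ?thesis ..
      qed
    qed
  qed
qed

lemma choose_min:
  fixes f :: "'a \<Rightarrow> real"
  assumes "finite C" "k \<le> card C"
  shows "\<exists>S\<subseteq>C. card S = k \<and> (\<forall>v\<in>S. \<forall>w\<in>C - S. f v \<le> f w)"
  using assms(2)
proof (induction k)
  case 0
  then show ?case by auto
next
  case (Suc k)
  then obtain S where S: "S \<subseteq> C" "card S = k" "\<forall>v\<in>S. \<forall>w\<in>C - S. f v \<le> f w" by auto
  have finS: "finite S" using S(1) assms(1) finite_subset by blast
  have ne: "C - S \<noteq> {}"
  proof
    assume "C - S = {}"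
    hence "C \<subseteq> S" by auto
    hence "card C \<le> card S" using card_mono finS by blast
    thus False using Suc.prems S(2) by simp
  qed
  have fin: "finite (C - S)" using assms(1) by simp
  define w0 where "w0 = arg_min_on f (C - S)"
  have w0: "w0 \<in> C - S" "\<forall>w\<in>C - S. f w0 \<le> f w"
    using arg_min_if_finite(1)[OF fin ne, of f] arg_min_least[OF fin ne, of _ f] unfolding w0_def by auto
  show ?case
  proof (intro exI[of _ "insert w0 S"] conjI)
    show "insert w0 S \<subseteq> C" using w0 S by auto
    show "card (insert w0 S) = Suc k" using w0 S finS by auto
    show "\<forall>v\<in>insert w0 S. \<forall>w\<in>C - insert w0 S. f v \<le> f w" using w0 S by auto
  qed
qed

definition flipv :: "(nat \<Rightarrow> real) \<Rightarrow> nat set \<Rightarrow> nat \<Rightarrow> real" where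
  "flipv b X = (\<lambda>j. if j \<in> X then 1 - b j else b j)"

lemma flipv_inj:
  assumes "\<And>j. b j \<in> {0,1}" "flipv b X = flipv b Y"
  shows "X = Y"
proof (rule set_eqI)
  fix x
  have "flipv b X x = flipv b Y x" using assms(2) by simp
  moreover have "1 - b x \<noteq> b x" using assms(1)[of x] by auto
  ultimately show "x \<in> X \<longleftrightarrow> x \<in> Y" unfolding flipv_def by (auto split: if_splits)
qed

lemma xor_flip:
  assumes "\<And>j. b j \<in> {0,1}" "p \<notin> X"
  shows "xorv (flipv b X) (unitv p) = flipv b (insert p X)"
proof
  fix j
  show "xorv (flipv b X) (unitv p) j = flipv b (insert p X) j"
    using assms(1)[of j] assms(2) unfolding xorv_def flipv_def unitv_def by auto
qed

lemma flip_empty: "flipv b {} = b" unfolding flipv_def by auto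

theorem proposition1:
  fixes s :: nat and alpha :: "nat \<Rightarrow> real"
  assumes "(2::nat) ^ s \<ge> 8"
    and "\<And>j. j < 2 ^ s \<Longrightarrow> alpha j \<noteq> 0"
    and "\<And>i j. i < j \<Longrightarrow> j < 2 ^ s \<Longrightarrow> \<bar>alpha i\<bar> < \<bar>alpha j\<bar>"
  shows "\<exists>S. S \<subseteq> cand_set (2 ^ s) alpha \<and> card S = 8 \<and>
           (\<forall>v\<in>S. \<forall>w\<in>binvecs (2 ^ s) - S. delta (2 ^ s) alpha v \<le> delta (2 ^ s) alpha w)"
proof -
  define B where "B = (2::nat) ^ s"
  define b where "b = hard_dec B alpha"
  define a where "a = (\<lambda>j. \<bar>alpha j\<bar>)"
  have B8: "B \<ge> 8" using assms(1) B_def by simp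
  have b01: "b j \<in> {0,1}" for j
    using assms(2)[of j] unfolding b_def hard_dec_def B_def
    by (cases "alpha j > 0") (auto simp: sgn_if)
  have bout: "b j = 0" if "j \<ge> B" for j using that unfolding b_def hard_dec_def by auto
  have C: "cand_set B alpha = flipv b ` Cs"
  proof -
    have e: "xorv b (unitv p) = flipv b {p}" for p
      using xor_flip[of b p "{}", OF b01] by (simp add: flip_empty)
    have "cand_set B alpha = {b} \<union> {flipv b {p} | p. p \<le> 6} \<union>
        {flipv b {1,0}, flipv b {2,0}, flipv b {2,1}, flipv b {3,0}, flipv b {2,1,0}}"
      unfolding cand_set_def Let_def b_def[symmetric] e
      by (simp add: xor_flip[OF b01])
    also have "\<dots> = flipv b ` Cs"
    proof -
      have s1: "{1,0} = {0,1::nat}" "{2,0} = {0,2::nat}" "{2,1} = {1,2::nat}" "{3,0} = {0,3::nat}"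
        "{2,1,0} = {0,1,2::nat}" "{2,0,1} = {0,1,2::nat}" by auto
      have s2: "{flipv b {p} | p. p \<le> 6} = flipv b ` ((\<lambda>p. {p}) ` {..6})" by auto
      have s3: "Cs = {{}} \<union> (\<lambda>p. {p}) ` {..6} \<union> {{0,1},{0,2},{1,2},{0,3},{0,1,2}}"
        unfolding Cs_def by auto
      show ?thesis unfolding s1 s2 s3 image_Un image_insert image_empty flip_empty ..
    qed
    finally show ?thesis .
  qed
  have finC: "finite (cand_set B alpha)"
  proof -
    have "finite ({{}} \<union> (\<lambda>p. {p}) ` {..6::nat} \<union> {{0,1},{0,2},{1,2},{0,3},{0,1,2}})" by simp
    moreover have "Cs = {{}} \<union> (\<lambda>p. {p}) ` {..6} \<union> {{0,1},{0,2},{1,2},{0,3},{0,1,2}}"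
      unfolding Cs_def by auto
    ultimately have "finite Cs" by metis
    thus ?thesis using C by simp
  qed
  have injC: "inj_on (flipv b) A" for A
    using flipv_inj[OF b01] by (meson inj_onI)
  have delta_flip: "delta B alpha (flipv b X) = sum a X" if "X \<subseteq> {..<B}" for X
  proof -
    have "delta B alpha (flipv b X) = (\<Sum>j<B. (if j \<in> X then a j else 0))"
      unfolding delta_def b_def[symmetric] a_def
    proof (rule sum.cong)
      fix j
      show "\<bar>flipv b X j - b j\<bar> * \<bar>alpha j\<bar> = (if j \<in> X then \<bar>alpha j\<bar> else 0)"
        using b01[of j] unfolding flipv_def by auto
    qed simp
    also have "\<dots> = sum a ({..<B} \<inter> X)" by (simp add: sum.inter_restrict)
    also have "{..<B} \<inter> X = X" using that by auto
    finally show ?thesis .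
  qed
  have Cs_small: "X \<subseteq> {..<B}" if "X \<in> Cs" for X
    using that B8 unfolding Cs_def by auto
  have bin_flip: "w = flipv b {j. j < B \<and> w j \<noteq> b j}" if "w \<in> binvecs B" for w
  proof
    fix j
    show "w j = flipv b {j. j < B \<and> w j \<noteq> b j} j"
      using that b01[of j] bout[of j] unfolding binvecs_def flipv_def
      by (cases "j < B") auto
  qed
  have card13: "8 \<le> card (cand_set B alpha)"
  proof -
    let ?T = "{{},{0},{1},{2},{3},{4},{5},{6}} :: nat set set"
    have "?T \<subseteq> Cs" unfolding Cs_def by auto
    hence "flipv b ` ?T \<subseteq> cand_set B alpha" using C by auto
    moreover have "card (flipv b ` ?T) = 8"
      using card_image[OF injC[of ?T]] by (simp add: card_insert_if doubleton_eq_iff insert_eq_iff)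
    ultimately show ?thesis using card_mono[OF finC] by metis
  qed
  obtain S where S: "S \<subseteq> cand_set B alpha" "card S = 8"
    "\<forall>v\<in>S. \<forall>w\<in>cand_set B alpha - S. delta B alpha v \<le> delta B alpha w"
    using choose_min[OF finC card13, of "delta B alpha"] by blast
  have finS: "finite S" using S(1) finC finite_subset by blast
  have "\<forall>v\<in>S. \<forall>w\<in>binvecs B - S. delta B alpha v \<le> delta B alpha w"
  proof (intro ballI)
    fix v w assume v: "v \<in> S" and w: "w \<in> binvecs B - S"
    show "delta B alpha v \<le> delta B alpha w"
    proof (cases "w \<in> cand_set B alpha")
      case True
      then show ?thesis using S(3) v w by auto
    next
      case False
      define F where "F = {j. j < B \<and> w j \<noteq> b j}"
      have wF: "w = flipv b F" using bin_flip w F_def by auto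
      have FB: "F \<subseteq> {..<B}" unfolding F_def by auto
      have FC: "F \<notin> Cs" using False C wF by auto
      obtain Ts where Ts: "Ts \<subseteq> Cs" "card Ts = 8" "\<forall>X\<in>Ts. sum a X \<le> sum a F"
        using comb[OF B8 _ _ FB FC, of a] assms(3) unfolding a_def B_def by auto
      let ?T = "flipv b ` Ts"
      have T1: "?T \<subseteq> cand_set B alpha" using Ts C by auto
      have T2: "card ?T = 8" using card_image[OF injC[of Ts]] Ts by simp
      have T3: "\<forall>t\<in>?T. delta B alpha t \<le> delta B alpha w"
        using Ts delta_flip Cs_small wF FB by auto
      show ?thesis
      proof (rule ccontr)
        assume neg: "\<not> ?thesis"
        have "?T \<subseteq> S - {v}"
        proof
          fix t assume t: "t \<in> ?T"
          have "t \<in> S"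
          proof (rule ccontr)
            assume "t \<notin> S"
            hence "delta B alpha v \<le> delta B alpha t" using S(3) v t T1 by auto
            thus False using T3 t neg by force
          qed
          moreover have "t \<noteq> v" using T3 t neg by force
          ultimately show "t \<in> S - {v}" by auto
        qed
        hence "card ?T \<le> card (S - {v})" using finS by (simp add: card_mono)
        also have "\<dots> = 7" using v S(2) finS by simp
        finally show False using T2 by simp
      qed
    qed
  qed
  thus ?thesis using S unfolding B_def by blast
qed

end
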